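(* Let $m,n,M$ be positive integers, let $c(0)>0$ be real, and define $c(k)=c(k-1)/2^{\frac{m+n}{m}}$ for $k\ge1$, $\hat c(0)=\lceil 2^Mc(0)\rceil/2^M$ and $\hat c(k)=\lceil 2^M\hat c(k-1)2^{-\frac{m+n}{m}}\rceil/2^M$ for $k\ge1$. Then for each integer $k\ge0$, $$c(k)\le\hat c(k)<c(k)+\frac1{2^M}\sum_{i=0}^k2^{-\frac{i(m+n)}{m}}<c(k)+\frac2{2^M}.$$ *)

theory Defs
  imports Complex_Main
begin

fun cseq :: "nat \<Rightarrow> nat \<Rightarrow> real \<Rightarrow> nat \<Rightarrow> real" where
  "cseq m n c0 0 = c0"
| "cseq m n c0 (Suc k) = cseq m n c0 k / 2 powr ((real m + real n) / real m)"

fun chat :: "nat \<Rightarrow> nat \<Rightarrow> nat \<Rightarrow> real \<Rightarrow> nat \<Rightarrow> real" where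
  "chat m n M c0 0 = real_of_int \<lceil>2 ^ M * c0\<rceil> / 2 ^ M"
| "chat m n M c0 (Suc k) =
     real_of_int \<lceil>2 ^ M * chat m n M c0 k * 2 powr (- ((real m + real n) / real m))\<rceil> / 2 ^ M"

end

theory Submission
  imports Defs
begin

lemma main_ind:
  fixes m n M k :: nat and c0 :: real
  defines "r \<equiv> 2 powr (- ((real m + real n) / real m))"
  shows "0 \<le> chat m n M c0 k - cseq m n c0 k \<and>
         chat m n M c0 k - cseq m n c0 k < (\<Sum>i=0..k. r ^ i) / 2 ^ M"
proof (induction k)
  case 0
  have "2 ^ M * c0 \<le> real_of_int \<lceil>2 ^ M * c0\<rceil>" by linarith
  moreover have "real_of_int \<lceil>2 ^ M * c0\<rceil> < 2 ^ M * c0 + 1" by linarith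
  ultimately have "c0 \<le> real_of_int \<lceil>2 ^ M * c0\<rceil> / 2 ^ M"
     "real_of_int \<lceil>2 ^ M * c0\<rceil> / 2 ^ M < c0 + 1 / 2 ^ M"
    by (simp_all add: field_simps)
  thus ?case by simp
next
  case (Suc k)
  have r0: "r > 0" unfolding r_def by simp
  have cs: "cseq m n c0 (Suc k) = cseq m n c0 k * r"
    unfolding r_def by (simp add: powr_minus_divide)
  define x where "x = 2 ^ M * chat m n M c0 k * r"
  have ch: "chat m n M c0 (Suc k) = real_of_int \<lceil>x\<rceil> / 2 ^ M"
    unfolding x_def r_def by simp
  have "x \<le> real_of_int \<lceil>x\<rceil>" "real_of_int \<lceil>x\<rceil> < x + 1" by linarith+
  hence l: "chat m n M c0 k * r \<le> chat m n M c0 (Suc k)"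
    and u: "chat m n M c0 (Suc k) < chat m n M c0 k * r + 1 / 2 ^ M"
    unfolding ch x_def by (simp_all add: field_simps)
  have sumeq: "(\<Sum>i=0..Suc k. r ^ i) = 1 + r * (\<Sum>i=0..k. r ^ i)"
    by (subst sum.atLeast0_atMost_Suc_shift) (simp add: sum_distrib_left del: sum.atLeast0_atMost_Suc)
  have e1: "0 \<le> (chat m n M c0 k - cseq m n c0 k) * r" using Suc r0 by simp
  have e2: "(chat m n M c0 k - cseq m n c0 k) * r < (\<Sum>i=0..k. r ^ i) / 2 ^ M * r"
    using Suc r0 mult_strict_right_mono by blast
  show ?case
  proof
    show "0 \<le> chat m n M c0 (Suc k) - cseq m n c0 (Suc k)"
      using l e1 cs by (simp add: algebra_simps)
    have "chat m n M c0 (Suc k) - cseq m n c0 (Suc k)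
          < (chat m n M c0 k - cseq m n c0 k) * r + 1 / 2 ^ M"
      using u cs by (simp add: algebra_simps)
    also have "\<dots> < (\<Sum>i=0..k. r ^ i) / 2 ^ M * r + 1 / 2 ^ M" using e2 by simp
    also have "\<dots> = (\<Sum>i=0..Suc k. r ^ i) / 2 ^ M" unfolding sumeq by (simp add: field_simps)
    finally show "chat m n M c0 (Suc k) - cseq m n c0 (Suc k) < (\<Sum>i=0..Suc k. r ^ i) / 2 ^ M" .
  qed
qed

lemma geom_lt2:
  fixes r :: real
  assumes "0 \<le> r" "r \<le> 1/2"
  shows "(\<Sum>i=0..k. r ^ i) < 2"
proof -
  have "(\<Sum>i=0..k. r ^ i) \<le> (\<Sum>i=0..k. (1/2::real) ^ i)"
    by (rule sum_mono) (rule power_mono, insert assms, simp_all)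
  also have "(\<Sum>i=0..k. (1/2::real) ^ i) = 2 - (1/2)^k"
    by (induction k) (simp_all add: field_simps)
  also have "\<dots> < 2" by simp
  finally show ?thesis .
qed

theorem lemma5:
  fixes m n M k :: nat and c0 :: real
  assumes "m > 0" "n > 0" "M > 0" "c0 > 0"
  shows "cseq m n c0 k \<le> chat m n M c0 k
    \<and> chat m n M c0 k < cseq m n c0 k + 1 / 2 ^ M *
          (\<Sum>i=0..k. 2 powr (- (real i * (real m + real n) / real m)))
    \<and> cseq m n c0 k + 1 / 2 ^ M *
          (\<Sum>i=0..k. 2 powr (- (real i * (real m + real n) / real m)))
       < cseq m n c0 k + 2 / 2 ^ M"
proof -
  define r where "r = (2::real) powr (- ((real m + real n) / real m))"
  have pw: "2 powr (- (real i * (real m + real n) / real m)) = r ^ i" for i :: nat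
  proof -
    have "2 powr (- (real i * (real m + real n) / real m))
          = (2 powr (- ((real m + real n) / real m))) powr real i"
      by (simp add: powr_powr algebra_simps)
    also have "\<dots> = r ^ i" unfolding r_def by (simp add: powr_realpow)
    finally show ?thesis .
  qed
  have r0: "0 \<le> r" unfolding r_def by simp
  have "1 \<le> (real m + real n) / real m" using assms by simp
  hence "(2::real) powr 1 \<le> 2 powr ((real m + real n) / real m)" by (rule powr_mono) simp_all
  hence "r \<le> 1/2" unfolding r_def by (simp add: powr_minus divide_simps)
  hence g: "(\<Sum>i=0..k. r ^ i) < 2" using geom_lt2 r0 by blast
  have mi: "0 \<le> chat m n M c0 k - cseq m n c0 k \<and>
         chat m n M c0 k - cseq m n c0 k < (\<Sum>i=0..k. r ^ i) / 2 ^ M"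
    using main_ind unfolding r_def by blast
  show ?thesis unfolding pw using mi g by (simp add: divide_strict_right_mono)
qed

end
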